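(* Consider Algorithm AUX with parameter $t_0$ on an instance satisfying the standing assumption, with an edge labeling as in the context. For every offline vertex $u$ and every $t\in[0,1]$, we have $f_u(t)\le f(t)$.
   Context: **Model.** Poisson arrival model. Each online type $i$ independently arrives according to a Poisson process of rate $\lambda_i$ on $[0,1]$. On arrival, a vertex is immediately and irrevocably matched to an unmatched offline neighbor or discarded. Each offline vertex is matched at most once. The instance is a bipartite graph $(I,J,E)$ with rates $\lambda_i>0$. **Standing assumption.** There are values $x_{ij}\ge0$ (an optimal Jaillet–Lu LP solution) with $\sum_i x_{ij}=1$ for all $j$, and each type is one of two kinds: - first-class: one neighbor $j$, with $x_{ij}=\lambda_i$; - second-class: two neighbors $j_1,j_2$, with $x_{ij_1}=x_{ij_2}=\lambda_i/2$. **Labeling.** Each edge is labeled first-class or second-class. Edges of first-class types are labeled first-class. For every $j$, the first-class-labeled edges at $j$ have total $x$-value $1-\ln2$. **Reference process.** $H$ has offline vertices $a,b$; a type of rate $2\ln2$ adjacent to both; and types of rate $1-\ln2$ adjacent only to $a$, resp. only to $b$. Algorithm RES with parameter $t_0$ works as follows: - single-neighbor arrivals are matched if their neighbor is unmatched; - a two-neighbor arrival at time $t>t_0$ with an unmatched neighbor is matched to a uniformly random unmatched neighbor. On $H$ under RES, $f(t)$ is the probability that a given offline vertex is matched by time $t$, $g(t)$ the probability both are, and $\bar g=1-g$. **Algorithm AUX (parameter $t_0$).** Under AUX: - $f_u(t)$ is the probability that offline $u$ is matched by time $t$, and $\bar f_u=1-f_u$; - $g'_{u,v}(t)$ is the probability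 that both $u$ and $v$ are unmatched at time $t$. Edges are used only if their offline endpoint is unmatched. - A first-class arrival is matched to its neighbor if possible. - A second-class arrival of type $i$ with neighbors $u,v$ chooses at most one edge, with disjoint probabilities: - each first-class-labeled edge $(i,u)$ with probability $1/2$; - if the arrival time is $t>t_0$, each second-class-labeled edge $(i,u)$ with probability $\frac12\min\{\bar g(t)/(2\bar f_u(t)-g'_{u,v}(t)),1\}$ if $v$ is unmatched, or $\min\{\bar g(t)/(2\bar f_u(t)-g'_{u,v}(t)),1\}$ if $v$ is matched. *)

theory Defs
  imports "HOL-Analysis.Analysis"
begin

text \<open>
  Continuous-time Markov chains on the state space of sets of matched offline
  vertices.  A state is the set S (a subset of the offline vertex set J) of
  matched offline vertices; r t S u is the instantaneous rate at which the
  unmatched offline vertex u becomes matched at time t when the current state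
  is S.  p t S is the probability of being in state S at time t.
\<close>

definition kolmogorov ::
  "'j set \<Rightarrow> (real \<Rightarrow> 'j set \<Rightarrow> 'j \<Rightarrow> real) \<Rightarrow> (real \<Rightarrow> 'j set \<Rightarrow> real) \<Rightarrow> bool" where
  "kolmogorov J r p \<longleftrightarrow>
     (\<forall>t\<in>{0..1}. \<forall>S\<in>Pow J.
        ((\<lambda>s. (\<Sum>u\<in>S. p s (S - {u}) * r s (S - {u}) u) - p s S * (\<Sum>u\<in>J - S. r s S u))
          has_integral (p t S - (if S = {} then 1 else 0))) {0..t})"

text \<open>Offline vertices of H: a = True, b = False.  Single-neighbor types of rate
  1 - ln 2 at each vertex; a two-neighbor type of rate 2 ln 2.\<close>

definition res_rate :: "real \<Rightarrow> real \<Rightarrow> bool set \<Rightarrow> bool \<Rightarrow> real" where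
  "res_rate t0 t S u =
     (1 - ln 2) + (if t0 < t then 2 * ln 2 * (if (\<not> u) \<in> S then 1 else 1/2) else 0)"

definition res_f :: "(real \<Rightarrow> bool set \<Rightarrow> real) \<Rightarrow> real \<Rightarrow> real" where
  "res_f q t = (\<Sum>S\<in>{S. True \<in> S}. q t S)"

definition res_g :: "(real \<Rightarrow> bool set \<Rightarrow> real) \<Rightarrow> real \<Rightarrow> real" where
  "res_g q t = q t UNIV"

definition aux_fbar :: "'j set \<Rightarrow> (real \<Rightarrow> 'j set \<Rightarrow> real) \<Rightarrow> 'j \<Rightarrow> real \<Rightarrow> real" where
  "aux_fbar J p u t = (\<Sum>S\<in>{S\<in>Pow J. u \<notin> S}. p t S)"

definition aux_f :: "'j set \<Rightarrow> (real \<Rightarrow> 'j set \<Rightarrow> real) \<Rightarrow> 'j \<Rightarrow> real \<Rightarrow> real" where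
  "aux_f J p u t = (\<Sum>S\<in>{S\<in>Pow J. u \<in> S}. p t S)"

definition aux_gp :: "'j set \<Rightarrow> (real \<Rightarrow> 'j set \<Rightarrow> real) \<Rightarrow> 'j \<Rightarrow> 'j \<Rightarrow> real \<Rightarrow> real" where
  "aux_gp J p u v t = (\<Sum>S\<in>{S\<in>Pow J. u \<notin> S \<and> v \<notin> S}. p t S)"

text \<open>Probability that an arrival of type i at time t, in state S (with u unmatched),
  is matched along edge (i,u).  lbl i u = True means the edge is labeled first-class.
  gbar is the function 1 - g of the reference process.\<close>
definition aux_prob ::
  "'j set \<Rightarrow> ('i \<Rightarrow> 'j set) \<Rightarrow> ('i \<Rightarrow> 'j \<Rightarrow> bool) \<Rightarrow> real \<Rightarrow> (real \<Rightarrow> real)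
    \<Rightarrow> (real \<Rightarrow> 'j set \<Rightarrow> real) \<Rightarrow> 'i \<Rightarrow> real \<Rightarrow> 'j set \<Rightarrow> 'j \<Rightarrow> real" where
  "aux_prob J nbr lbl t0 gbar p i t S u =
     (if card (nbr i) = 1 then 1
      else (let v = the_elem (nbr i - {u}) in
            if lbl i u then 1/2
            else if t0 < t then
              (let m = min (gbar t / (2 * aux_fbar J p u t - aux_gp J p u v t)) 1
               in if v \<in> S then m else m / 2)
            else 0))"

definition aux_rate ::
  "'i set \<Rightarrow> 'j set \<Rightarrow> ('i \<Rightarrow> 'j set) \<Rightarrow> ('i \<Rightarrow> real) \<Rightarrow> ('i \<Rightarrow> 'j \<Rightarrow> bool) \<Rightarrow> real
    \<Rightarrow> (real \<Rightarrow> real) \<Rightarrow> (real \<Rightarrow> 'j set \<Rightarrow> real) \<Rightarrow> real \<Rightarrow> 'j set \<Rightarrow> 'j \<Rightarrow> real" where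
  "aux_rate I J nbr lam lbl t0 gbar p t S u =
     (\<Sum>i\<in>{i\<in>I. u \<in> nbr i}. lam i * aux_prob J nbr lbl t0 gbar p i t S u)"

end

theory Submission
  imports Defs
begin


lemma nonneg_ode:
  fixes y h :: "real \<Rightarrow> real" and a :: real
  assumes I: "\<forall>t\<in>{0..1}. (h has_integral (y t - a)) {0..t}"
    and a: "a \<ge> 0"
    and c: "\<forall>s\<in>{0..1}. y s < 0 \<longrightarrow> h s \<ge> 0"
  shows "\<forall>t\<in>{0..1}. y t \<ge> 0"
proof (rule ccontr)
  assume "\<not> ?thesis"
  then obtain t1 where t1: "t1 \<in> {0..1}" "y t1 < 0" by auto
  have hint: "h integrable_on {0..1}" using I by auto
  have yeq: "\<forall>t\<in>{0..1}. y t = a + integral {0..t} h"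
    using I by (metis add.commute diff_add_cancel integral_unique)
  have y0: "y 0 = a"
  proof -
    have "(h has_integral (y 0 - a)) {0}" using I[rule_format, of 0] by simp
    then have "y 0 - a = 0" using has_integral_refl(2)[of h 0] has_integral_unique by blast
    then show ?thesis by simp
  qed
  have cont1: "continuous_on {0..1} (\<lambda>t. a + integral {0..t} h)"
    by (intro continuous_intros indefinite_integral_continuous_1 hint)
  have cont: "continuous_on {0..1} y"
    using continuous_on_eq[OF cont1] yeq by metis
  define K where "K = {s\<in>{0..t1}. y s \<ge> 0}"
  have Keq: "K = {0..t1} \<inter> y -` {0..}" unfolding K_def by auto
  have contK: "continuous_on {0..t1} y" using continuous_on_subset[OF cont] t1 by auto
  have "closed K" unfolding Keq by (rule continuous_closed_preimage[OF contK]) auto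
  then have Kc: "compact K" unfolding Keq
    by (meson Int_lower1 bounded_closed_interval bounded_subset compact_eq_bounded_closed)
  have Kne: "K \<noteq> {}" unfolding K_def using y0 a t1 by auto
  obtain tau where tau: "tau \<in> K" "\<forall>s\<in>K. s \<le> tau"
    using compact_attains_sup[OF Kc Kne] by auto
  have tau1: "0 \<le> tau" "tau \<le> t1" "y tau \<ge> 0" using tau(1) unfolding K_def by auto
  have contt: "continuous_on {tau..t1} y"
    using continuous_on_subset[OF cont] tau1 t1 by auto
  obtain sg where sg: "tau \<le> sg" "sg \<le> t1" "y sg = y t1 / 2"
    using IVT2'[of y t1 "y t1 / 2" tau] contt tau1 t1 by auto
  have sgt: "tau < sg" using sg tau1 t1 by (cases "tau = sg") auto
  have neg: "\<forall>s\<in>{sg..t1}. y s < 0"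
  proof
    fix s assume s: "s \<in> {sg..t1}"
    show "y s < 0"
    proof (rule ccontr)
      assume "\<not> y s < 0"
      then have "s \<in> K" unfolding K_def using s tau1 sgt by auto
      then show False using tau(2) s sgt by force
    qed
  qed
  have hpos: "\<forall>s\<in>{sg..t1}. h s \<ge> 0" using neg c t1 tau1 sgt by auto
  have intsub: "h integrable_on {sg..t1}"
    using integrable_subinterval_real[OF hint] tau1 sgt t1 by auto
  have "(h has_integral ((y sg - a) + integral {sg..t1} h)) {0..t1}"
  proof (rule has_integral_combine[of 0 sg t1 h])
    show "0 \<le> sg" "sg \<le> t1" using tau1 sgt sg by auto
    show "(h has_integral (y sg - a)) {0..sg}" using I sg t1 tau1 sgt by auto
    show "(h has_integral integral {sg..t1} h) {sg..t1}" using intsub by (rule integrable_integral)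
  qed
  then have "y t1 - a = (y sg - a) + integral {sg..t1} h"
    using I t1 has_integral_unique by blast
  moreover have "integral {sg..t1} h \<ge> 0"
    using integral_nonneg[OF intsub] hpos by auto
  ultimately show False using sg t1 by linarith
qed



definition kint :: "'j set \<Rightarrow> (real \<Rightarrow> 'j set \<Rightarrow> 'j \<Rightarrow> real) \<Rightarrow> (real \<Rightarrow> 'j set \<Rightarrow> real) \<Rightarrow> real \<Rightarrow> 'j set \<Rightarrow> real" where
  "kint J r p s S = (\<Sum>u\<in>S. p s (S - {u}) * r s (S - {u}) u) - p s S * (\<Sum>u\<in>J - S. r s S u)"

lemma pair_sum:
  assumes "finite J"
  shows "(\<Sum>S\<in>{S\<in>Pow J. P S}. \<Sum>w\<in>S. \<phi> (S - {w}) w)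
       = (\<Sum>T\<in>Pow J. \<Sum>w\<in>{w\<in>J - T. P (insert w T)}. \<phi> T w)"
proof -
  have fJ: "finite (Pow J)" using assms by simp
  have fin1: "\<forall>S\<in>{S\<in>Pow J. P S}. finite S" using assms finite_subset by auto
  have fin2: "\<forall>T\<in>Pow J. finite {w\<in>J - T. P (insert w T)}" using assms by auto
  have L: "(\<Sum>S\<in>{S\<in>Pow J. P S}. \<Sum>w\<in>S. \<phi> (S - {w}) w)
     = (\<Sum>(S,w)\<in>Sigma {S\<in>Pow J. P S} (\<lambda>S. S). \<phi> (S - {w}) w)"
    by (rule sum.Sigma) (use fJ fin1 in auto)
  have R: "(\<Sum>T\<in>Pow J. \<Sum>w\<in>{w\<in>J - T. P (insert w T)}. \<phi> T w)
     = (\<Sum>(T,w)\<in>Sigma (Pow J) (\<lambda>T. {w\<in>J - T. P (insert w T)}). \<phi> T w)"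
    by (rule sum.Sigma) (use fJ fin2 in auto)
  have bij: "bij_betw (\<lambda>(T,w). (insert w T, w)) (Sigma (Pow J) (\<lambda>T. {w\<in>J - T. P (insert w T)}))
        (Sigma {S\<in>Pow J. P S} (\<lambda>S. S))"
  proof (rule bij_betw_byWitness[where f' = "\<lambda>(S,w). (S - {w}, w)"])
    show "\<forall>a\<in>Sigma (Pow J) (\<lambda>T. {w \<in> J - T. P (insert w T)}).
       (case case a of (T, w) \<Rightarrow> (insert w T, w) of (S, w) \<Rightarrow> (S - {w}, w)) = a" by auto
    show "\<forall>a\<in>Sigma {S \<in> Pow J. P S} (\<lambda>S. S).
       (case case a of (S, w) \<Rightarrow> (S - {w}, w) of (T, w) \<Rightarrow> (insert w T, w)) = a" by auto
    show "(\<lambda>(T, w). (insert w T, w)) ` Sigma (Pow J) (\<lambda>T. {w \<in> J - T. P (insert w T)})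
       \<subseteq> Sigma {S \<in> Pow J. P S} (\<lambda>S. S)" by auto
    show "(\<lambda>(S, w). (S - {w}, w)) ` Sigma {S \<in> Pow J. P S} (\<lambda>S. S)
       \<subseteq> Sigma (Pow J) (\<lambda>T. {w \<in> J - T. P (insert w T)})" by (auto simp: insert_absorb)
  qed
  have "(\<Sum>(T,w)\<in>Sigma (Pow J) (\<lambda>T. {w\<in>J - T. P (insert w T)}). \<phi> T w)
     = (\<Sum>x\<in>Sigma (Pow J) (\<lambda>T. {w\<in>J - T. P (insert w T)}). (\<lambda>(S,w). \<phi> (S - {w}) w) ((\<lambda>(T,w). (insert w T, w)) x))"
    by (intro sum.cong) auto
  also have "\<dots> = (\<Sum>(S,w)\<in>Sigma {S\<in>Pow J. P S} (\<lambda>S. S). \<phi> (S - {w}) w)"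
    by (rule sum.reindex_bij_betw[OF bij])
  finally show ?thesis using L R by simp
qed

lemma sum_kint:
  assumes "finite J"
  shows "(\<Sum>S\<in>{S\<in>Pow J. P S}. kint J r p s S)
    = (\<Sum>T\<in>Pow J. \<Sum>w\<in>{w\<in>J - T. P (insert w T)}. p s T * r s T w)
      - (\<Sum>S\<in>{S\<in>Pow J. P S}. \<Sum>w\<in>J - S. p s S * r s S w)"
  unfolding kint_def sum_subtractf
  using pair_sum[OF assms, where P=P and \<phi>="\<lambda>T w. p s T * r s T w"] by (simp add: sum_distrib_left)

lemma sum_kint_all:
  assumes "finite J"
  shows "(\<Sum>S\<in>Pow J. kint J r p s S) = 0"
proof -
  have a: "{S\<in>Pow J. True} = Pow J" by auto
  have b: "\<And>T. {w\<in>J - T. True} = J - T" by auto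
  show ?thesis using sum_kint[OF assms, where P="\<lambda>_. True" and r=r and p=p and s=s]
    unfolding a b by simp
qed

lemma sum_kint_u:
  assumes "finite J" "u \<in> J"
  shows "(\<Sum>S\<in>{S\<in>Pow J. u \<in> S}. kint J r p s S) = (\<Sum>T\<in>{T\<in>Pow J. u \<notin> T}. p s T * r s T u)"
proof -
  have fJ: "finite (Pow J)" using assms by simp
  have e: "\<And>T. T \<in> Pow J \<Longrightarrow> (\<Sum>w\<in>{w\<in>J - T. u \<in> insert w T}. p s T * r s T w)
     = (if u \<in> T then (\<Sum>w\<in>J - T. p s T * r s T w) else p s T * r s T u)"
  proof -
    fix T assume "T \<in> Pow J"
    show "?thesis T"
    proof (cases "u \<in> T")
      case True then show ?thesis by (simp add: set_diff_eq)
    next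
      case False
      then have "{w\<in>J - T. u \<in> insert w T} = {u}" using assms by auto
      then show ?thesis using False by simp
    qed
  qed
  have "(\<Sum>T\<in>Pow J. \<Sum>w\<in>{w\<in>J - T. u \<in> insert w T}. p s T * r s T w)
     = (\<Sum>T\<in>Pow J. if u \<in> T then (\<Sum>w\<in>J - T. p s T * r s T w) else p s T * r s T u)"
    using e by (rule sum.cong[OF refl])
  also have "\<dots> = (\<Sum>T\<in>Pow J \<inter> {T. u \<in> T}. \<Sum>w\<in>J - T. p s T * r s T w)
      + (\<Sum>T\<in>Pow J \<inter> - {T. u \<in> T}. p s T * r s T u)"
    by (rule sum.If_cases[OF fJ])
  also have "Pow J \<inter> {T. u \<in> T} = {S\<in>Pow J. u \<in> S}" by auto
  also have "Pow J \<inter> - {T. u \<in> T} = {T\<in>Pow J. u \<notin> T}" by auto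
  finally show ?thesis using sum_kint[OF assms(1), where P="\<lambda>S. u \<in> S" and r=r and p=p and s=s] by simp
qed



definition alp :: "real \<Rightarrow> real \<Rightarrow> real" where
  "alp t0 s = (1 - ln 2) + (if t0 < s then ln 2 else 0)"
definition bet :: "real \<Rightarrow> real \<Rightarrow> real" where
  "bet t0 s = (1 - ln 2) + (if t0 < s then 2 * ln 2 else 0)"

lemma UNIV_bool_minus: "UNIV - {True} = {False}" "UNIV - {False} = {True}" "(UNIV::bool set) - UNIV = {}"
  "(UNIV::bool set) - {} = UNIV" "{False, True} - {True} = {False}" by auto

lemma ki_e: "kint UNIV (res_rate t0) q s {} = - 2 * alp t0 s * q s {}"
  by (simp add: kint_def res_rate_def alp_def UNIV_bool algebra_simps)
lemma ki_A: "kint UNIV (res_rate t0) q s {True} = alp t0 s * q s {} - bet t0 s * q s {True}"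
  by (simp add: kint_def res_rate_def alp_def bet_def UNIV_bool_minus)
lemma ki_B: "kint UNIV (res_rate t0) q s {False} = alp t0 s * q s {} - bet t0 s * q s {False}"
  by (simp add: kint_def res_rate_def alp_def bet_def UNIV_bool_minus)
lemma ki_U: "kint UNIV (res_rate t0) q s UNIV = bet t0 s * (q s {True} + q s {False})"
  by (simp add: kint_def res_rate_def alp_def bet_def UNIV_bool_minus UNIV_bool algebra_simps)

lemma boolsets_True: "{S::bool set. True \<in> S} = {{True}, UNIV}"
proof (rule set_eqI)
  fix S :: "bool set"
  show "S \<in> {S. True \<in> S} \<longleftrightarrow> S \<in> {{True}, UNIV}"
  proof (cases "False \<in> S")
    case True
    then show ?thesis by (auto simp: set_eq_iff) (metis (full_types))
  next
    case False
    then show ?thesis by (auto simp: set_eq_iff) (metis (full_types))+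
  qed
qed

lemma res_f_eq: "res_f q t = q t {True} + q t UNIV"
proof -
  have "{True} \<noteq> (UNIV::bool set)" by auto
  then show ?thesis unfolding res_f_def boolsets_True by simp
qed

lemma H_props:
  assumes K0: "kolmogorov (UNIV::bool set) (res_rate t0) q"
  shows "\<forall>t\<in>{0..1}. 0 \<le> 1 - res_g q t"
    and "\<forall>t\<in>{0..1}. ((\<lambda>s. (1 - ln 2) * (1 - res_f q s) + (if t0 < s then ln 2 * (1 - res_g q s) else 0))
            has_integral res_f q t) {0..t}"
proof -
  have K: "\<forall>t\<in>{0..1}. ((\<lambda>s. kint UNIV (res_rate t0) q s S) has_integral (q t S - (if S = {} then 1 else 0))) {0..t}" for S
    using K0 unfolding kolmogorov_def kint_def by auto
  have l2: "0 < ln (2::real)" "ln (2::real) < 1" using ln_2_less_1 by auto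
  have alp0: "alp t0 s \<ge> 0" for s using l2 unfolding alp_def by auto
  have bet0: "bet t0 s \<ge> 0" for s using l2 unfolding bet_def by auto
  have hE: "\<forall>t\<in>{0..1}. ((\<lambda>s. - 2 * alp t0 s * q s {}) has_integral (q t {} - 1)) {0..t}"
    using K[of "{}"] unfolding ki_e by simp
  have hA: "\<forall>t\<in>{0..1}. ((\<lambda>s. alp t0 s * q s {} - bet t0 s * q s {True}) has_integral (q t {True} - 0)) {0..t}"
    using K[of "{True}"] unfolding ki_A by simp
  have hB: "\<forall>t\<in>{0..1}. ((\<lambda>s. alp t0 s * q s {} - bet t0 s * q s {False}) has_integral (q t {False} - 0)) {0..t}"
    using K[of "{False}"] unfolding ki_B by simp
  have hU: "\<forall>t\<in>{0..1}. ((\<lambda>s. bet t0 s * (q s {True} + q s {False})) has_integral (q t UNIV)) {0..t}"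
    using K[of "UNIV"] unfolding ki_U by simp
  have qe: "\<forall>t\<in>{0..1}. q t {} \<ge> 0"
    by (rule nonneg_ode[OF hE]) (use alp0 in \<open>auto intro!: mult_nonneg_nonpos\<close>)
  have qA: "\<forall>t\<in>{0..1}. q t {True} \<ge> 0"
  proof (rule nonneg_ode[OF hA])
    show "\<forall>s\<in>{0..1}. q s {True} < 0 \<longrightarrow> 0 \<le> alp t0 s * q s {} - bet t0 s * q s {True}"
    proof (intro ballI impI)
      fix s assume s: "s \<in> {0..1}" "q s {True} < 0"
      have "bet t0 s * q s {True} \<le> 0" using bet0[of s] s by (simp add: mult_nonneg_nonpos)
      moreover have "alp t0 s * q s {} \<ge> 0" using alp0[of s] qe s by simp
      ultimately show "0 \<le> alp t0 s * q s {} - bet t0 s * q s {True}" by simp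
    qed
  qed simp
  have qB: "\<forall>t\<in>{0..1}. q t {False} \<ge> 0"
  proof (rule nonneg_ode[OF hB])
    show "\<forall>s\<in>{0..1}. q s {False} < 0 \<longrightarrow> 0 \<le> alp t0 s * q s {} - bet t0 s * q s {False}"
    proof (intro ballI impI)
      fix s assume s: "s \<in> {0..1}" "q s {False} < 0"
      have "bet t0 s * q s {False} \<le> 0" using bet0[of s] s by (simp add: mult_nonneg_nonpos)
      moreover have "alp t0 s * q s {} \<ge> 0" using alp0[of s] qe s by simp
      ultimately show "0 \<le> alp t0 s * q s {} - bet t0 s * q s {False}" by simp
    qed
  qed simp
  have hd1: "\<forall>t\<in>{0..1}. ((\<lambda>s. - bet t0 s * (q s {True} - q s {False})) has_integral ((q t {True} - q t {False}) - 0)) {0..t}"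
  proof
    fix t :: real assume t: "t \<in> {0..1}"
    have "((\<lambda>s. (alp t0 s * q s {} - bet t0 s * q s {True}) - (alp t0 s * q s {} - bet t0 s * q s {False}))
       has_integral ((q t {True} - 0) - (q t {False} - 0))) {0..t}"
      by (rule has_integral_diff) (use hA hB t in auto)
    then show "((\<lambda>s. - bet t0 s * (q s {True} - q s {False})) has_integral ((q t {True} - q t {False}) - 0)) {0..t}"
      by (simp add: algebra_simps)
  qed
  have hd2: "\<forall>t\<in>{0..1}. ((\<lambda>s. - bet t0 s * (q s {False} - q s {True})) has_integral ((q t {False} - q t {True}) - 0)) {0..t}"
  proof
    fix t :: real assume t: "t \<in> {0..1}"
    have "((\<lambda>s. (alp t0 s * q s {} - bet t0 s * q s {False}) - (alp t0 s * q s {} - bet t0 s * q s {True}))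
       has_integral ((q t {False} - 0) - (q t {True} - 0))) {0..t}"
      by (rule has_integral_diff) (use hA hB t in auto)
    then show "((\<lambda>s. - bet t0 s * (q s {False} - q s {True})) has_integral ((q t {False} - q t {True}) - 0)) {0..t}"
      by (simp add: algebra_simps)
  qed
  have d1: "\<forall>t\<in>{0..1}. q t {True} - q t {False} \<ge> 0"
    by (rule nonneg_ode[OF hd1]) (use bet0 in \<open>auto intro!: mult_nonneg_nonpos\<close>)
  have d2: "\<forall>t\<in>{0..1}. q t {False} - q t {True} \<ge> 0"
    by (rule nonneg_ode[OF hd2]) (use bet0 in \<open>auto intro!: mult_nonneg_nonpos\<close>)
  have sym: "\<forall>t\<in>{0..1}. q t {False} = q t {True}" using d1 d2 by force
  have tot: "\<forall>t\<in>{0..1}. q t {} + q t {True} + q t {False} + q t UNIV = 1"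
  proof
    fix t :: real assume t: "t \<in> {0..1}"
    have "((\<lambda>s. - 2 * alp t0 s * q s {} + (alp t0 s * q s {} - bet t0 s * q s {True})
        + (alp t0 s * q s {} - bet t0 s * q s {False}) + bet t0 s * (q s {True} + q s {False}))
       has_integral ((q t {} - 1) + (q t {True} - 0) + (q t {False} - 0) + q t UNIV)) {0..t}"
      by (intro has_integral_add) (use hE hA hB hU t in auto)
    moreover have "(\<lambda>s. - 2 * alp t0 s * q s {} + (alp t0 s * q s {} - bet t0 s * q s {True})
        + (alp t0 s * q s {} - bet t0 s * q s {False}) + bet t0 s * (q s {True} + q s {False})) = (\<lambda>s. 0)"
      by (rule ext) (simp add: algebra_simps)
    ultimately show "q t {} + q t {True} + q t {False} + q t UNIV = 1" by simp
  qed
  show "\<forall>t\<in>{0..1}. 0 \<le> 1 - res_g q t"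
    using tot qe qA qB unfolding res_g_def by (smt (verit))
  show "\<forall>t\<in>{0..1}. ((\<lambda>s. (1 - ln 2) * (1 - res_f q s) + (if t0 < s then ln 2 * (1 - res_g q s) else 0))
            has_integral res_f q t) {0..t}"
  proof
    fix t :: real assume t: "t \<in> {0..1}"
    have "((\<lambda>s. (alp t0 s * q s {} - bet t0 s * q s {True}) + bet t0 s * (q s {True} + q s {False}))
       has_integral ((q t {True} - 0) + q t UNIV)) {0..t}"
      by (intro has_integral_add) (use hA hU t in auto)
    moreover have "(alp t0 s * q s {} - bet t0 s * q s {True}) + bet t0 s * (q s {True} + q s {False})
       = (1 - ln 2) * (1 - res_f q s) + (if t0 < s then ln 2 * (1 - res_g q s) else 0)"
      if s: "s \<in> {0..t}" for s
    proof -
      have s1: "s \<in> {0..1}" using s t by auto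
      have e1: "q s {False} = q s {True}" using sym s1 by auto
      have e2: "q s UNIV = 1 - q s {} - 2 * q s {True}" using tot[rule_format, OF s1] e1 by simp
      show ?thesis unfolding res_f_eq res_g_def e2 alp_def bet_def e1 by (simp add: algebra_simps)
    qed
    ultimately show "((\<lambda>s. (1 - ln 2) * (1 - res_f q s) + (if t0 < s then ln 2 * (1 - res_g q s) else 0))
            has_integral res_f q t) {0..t}"
      using has_integral_cong[of "{0..t}"] res_f_eq by (smt (verit))
  qed
qed



lemma min_lemma:
  fixes g D :: real assumes "g \<ge> 0" shows "min (g / D) 1 * D \<le> g"
proof (cases "D > 0")
  case True
  have "min (g / D) 1 \<le> g / D" by simp
  then have "min (g / D) 1 * D \<le> g / D * D" using True by (intro mult_right_mono) auto
  then show ?thesis using True by simp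
next
  case False
  show ?thesis
  proof (cases "D = 0")
    case True then show ?thesis using assms by simp
  next
    case False': False
    then have "D < 0" using False by simp
    then have "g / D \<le> 0" using assms by (simp add: divide_nonneg_neg)
    then have "min (g / D) 1 = g / D" by simp
    then show ?thesis using False' by simp
  qed
qed

lemma key_ineq:
  fixes I :: "'i set" and J :: "'j set" and nbr :: "'i \<Rightarrow> 'j set"
    and lam :: "'i \<Rightarrow> real" and x :: "'i \<Rightarrow> 'j \<Rightarrow> real" and lbl :: "'i \<Rightarrow> 'j \<Rightarrow> bool"
    and t0 :: real and gb :: "real \<Rightarrow> real" and p :: "real \<Rightarrow> 'j set \<Rightarrow> real"
    and u :: 'j and s :: real
  assumes fI: "finite I" and fJ: "finite J"
    and lam: "\<forall>i\<in>I. lam i > 0"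
    and cls: "\<forall>i\<in>I. (card (nbr i) = 1 \<and> (\<forall>j\<in>nbr i. x i j = lam i))
                \<or> (card (nbr i) = 2 \<and> (\<forall>j\<in>nbr i. x i j = lam i / 2))"
    and xs: "\<forall>j\<in>J. (\<Sum>i\<in>{i\<in>I. j \<in> nbr i}. x i j) = 1"
    and l1: "\<forall>i\<in>I. card (nbr i) = 1 \<longrightarrow> (\<forall>j\<in>nbr i. lbl i j)"
    and xl: "\<forall>j\<in>J. (\<Sum>i\<in>{i\<in>I. j \<in> nbr i \<and> lbl i j}. x i j) = 1 - ln 2"
    and u: "u \<in> J" and gb: "gb s \<ge> 0"
  shows "(\<Sum>T\<in>{T\<in>Pow J. u \<notin> T}. p s T * aux_rate I J nbr lam lbl t0 gb p s T u)
     \<le> (1 - ln 2) * aux_fbar J p u s + (if t0 < s then ln 2 * gb s else 0)"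
proof -
  define Iu where "Iu = {i\<in>I. u \<in> nbr i}"
  define A where "A = {T\<in>Pow J. u \<notin> T}"
  define fb where "fb = aux_fbar J p u s"
  have fb_def': "fb = (\<Sum>T\<in>A. p s T)" unfolding fb_def aux_fbar_def A_def by simp
  have fIu: "finite Iu" using fI unfolding Iu_def by simp
  have fA: "finite A" using fJ unfolding A_def by simp
  define c where "c i = lam i * (\<Sum>T\<in>A. p s T * aux_prob J nbr lbl t0 gb p i s T u)" for i
  have LHS: "(\<Sum>T\<in>A. p s T * aux_rate I J nbr lam lbl t0 gb p s T u) = (\<Sum>i\<in>Iu. c i)"
    unfolding aux_rate_def c_def Iu_def[symmetric] sum_distrib_left
    by (subst sum.swap) (simp add: mult_ac)
  define gg where "gg = (if t0 < s then gb s else 0)"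
  have gg0: "gg \<ge> 0" using gb unfolding gg_def by simp
  have ci: "c i \<le> (if lbl i u then x i u * fb else x i u * gg)" if i: "i \<in> Iu" for i
  proof (cases "lbl i u")
    case True
    have iI: "i \<in> I" "u \<in> nbr i" using i unfolding Iu_def by auto
    have lx: "lam i * aux_prob J nbr lbl t0 gb p i s T u = x i u" for T
      using cls iI True unfolding aux_prob_def by auto
    have "c i = (\<Sum>T\<in>A. p s T * x i u)"
      unfolding c_def sum_distrib_left by (intro sum.cong refl) (metis lx mult.left_commute)
    also have "\<dots> = x i u * fb" unfolding fb_def' by (metis sum_distrib_right mult.commute)
    finally show ?thesis using True by simp
  next
    case False
    have iI: "i \<in> I" "u \<in> nbr i" using i unfolding Iu_def by auto
    have c2: "card (nbr i) = 2" "x i u = lam i / 2" using cls l1 iI False by auto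
    define v where "v = the_elem (nbr i - {u})"
    define m where "m = min (gb s / (2 * aux_fbar J p u s - aux_gp J p u v s)) 1"
    have ap: "aux_prob J nbr lbl t0 gb p i s T u = (if t0 < s then (if v \<in> T then m else m / 2) else 0)" for T
      unfolding aux_prob_def v_def[symmetric] m_def[symmetric] Let_def using c2 False by simp
    show ?thesis
    proof (cases "t0 < s")
      case False
      then show ?thesis using `\<not> lbl i u` unfolding c_def ap gg_def by simp
    next
      case True
      have gp: "aux_gp J p u v s = (\<Sum>T\<in>A. if v \<notin> T then p s T else 0)"
      proof -
        have "{S\<in>Pow J. u \<notin> S \<and> v \<notin> S} = {T\<in>A. v \<notin> T}" unfolding A_def by auto
        then show ?thesis unfolding aux_gp_def using sum.inter_filter[OF fA] by simp
      qed
      have "(\<Sum>T\<in>A. p s T * (if v \<in> T then m else m / 2))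
          = m / 2 * (\<Sum>T\<in>A. 2 * p s T - (if v \<notin> T then p s T else 0))"
        unfolding sum_distrib_left by (intro sum.cong) auto
      also have "\<dots> = m / 2 * (2 * aux_fbar J p u s - aux_gp J p u v s)"
        unfolding gp sum_subtractf fb_def[symmetric] fb_def' sum_distrib_left[symmetric] by simp
      finally have eq: "(\<Sum>T\<in>A. p s T * (if v \<in> T then m else m / 2)) = m / 2 * (2 * aux_fbar J p u s - aux_gp J p u v s)" .
      have lam2: "lam i = 2 * x i u" using c2 by simp
      have "c i = lam i * (\<Sum>T\<in>A. p s T * (if v \<in> T then m else m / 2))"
        unfolding c_def ap using True by simp
      also have "\<dots> = x i u * (m * (2 * aux_fbar J p u s - aux_gp J p u v s))"
        unfolding eq lam2 by simp
      also have "\<dots> \<le> x i u * gg"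
        using min_lemma[OF gb] True c2 lam iI unfolding gg_def m_def
        by (intro mult_left_mono) auto
      finally show ?thesis using `\<not> lbl i u` by simp
    qed
  qed
  have "(\<Sum>i\<in>Iu. c i) \<le> (\<Sum>i\<in>Iu. if lbl i u then x i u * fb else x i u * gg)"
    using ci by (rule sum_mono)
  also have "\<dots> = (\<Sum>i\<in>Iu \<inter> {i. lbl i u}. x i u * fb) + (\<Sum>i\<in>Iu \<inter> - {i. lbl i u}. x i u * gg)"
    by (rule sum.If_cases[OF fIu])
  also have "\<dots> = (1 - ln 2) * fb + ln 2 * gg"
  proof -
    have e1: "Iu \<inter> {i. lbl i u} = {i\<in>I. u \<in> nbr i \<and> lbl i u}" unfolding Iu_def by auto
    have s1: "(\<Sum>i\<in>Iu \<inter> {i. lbl i u}. x i u) = 1 - ln 2" using xl u unfolding e1 by auto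
    have "(\<Sum>i\<in>Iu. x i u) = (\<Sum>i\<in>Iu. if lbl i u then x i u else x i u)" by simp
    also have "\<dots> = (\<Sum>i\<in>Iu \<inter> {i. lbl i u}. x i u) + (\<Sum>i\<in>Iu \<inter> - {i. lbl i u}. x i u)"
      by (rule sum.If_cases[OF fIu])
    finally have "(\<Sum>i\<in>Iu \<inter> - {i. lbl i u}. x i u) = ln 2" using s1 xs u unfolding Iu_def by auto
    then show ?thesis using s1 unfolding sum_distrib_right[symmetric] by (simp add: mult_ac)
  qed
  finally have "(\<Sum>i\<in>Iu. c i) \<le> (1 - ln 2) * fb + ln 2 * gg" .
  moreover have "ln 2 * gg = (if t0 < s then ln 2 * gb s else 0)" unfolding gg_def by simp
  ultimately show ?thesis using LHS unfolding A_def fb_def by linarith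
qed



theorem lemma4p3:
  fixes I :: "'i set" and J :: "'j set" and nbr :: "'i \<Rightarrow> 'j set"
    and lam :: "'i \<Rightarrow> real" and x :: "'i \<Rightarrow> 'j \<Rightarrow> real" and lbl :: "'i \<Rightarrow> 'j \<Rightarrow> bool"
    and t0 :: real and q :: "real \<Rightarrow> bool set \<Rightarrow> real" and p :: "real \<Rightarrow> 'j set \<Rightarrow> real"
    and u :: 'j and t :: real
  assumes "finite I" and "finite J"
    and "\<forall>i\<in>I. lam i > 0"
    and "\<forall>i\<in>I. nbr i \<subseteq> J"
    and "\<forall>i\<in>I. (card (nbr i) = 1 \<and> (\<forall>j\<in>nbr i. x i j = lam i))
                \<or> (card (nbr i) = 2 \<and> (\<forall>j\<in>nbr i. x i j = lam i / 2))"
    and "\<forall>j\<in>J. (\<Sum>i\<in>{i\<in>I. j \<in> nbr i}. x i j) = 1"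
    and "\<forall>i\<in>I. card (nbr i) = 1 \<longrightarrow> (\<forall>j\<in>nbr i. lbl i j)"
    and "\<forall>j\<in>J. (\<Sum>i\<in>{i\<in>I. j \<in> nbr i \<and> lbl i j}. x i j) = 1 - ln 2"
    and "kolmogorov (UNIV :: bool set) (res_rate t0) q"
    and "kolmogorov J (aux_rate I J nbr lam lbl t0 (\<lambda>s. 1 - res_g q s) p) p"
    and "u \<in> J" and "t \<in> {0..1}"
  shows "aux_f J p u t \<le> res_f q t"
proof -
  define gb where "gb = (\<lambda>s. 1 - res_g q s)"
  define R where "R = aux_rate I J nbr lam lbl t0 gb p"
  have fJ: "finite J" using assms(2) .
  have fP: "finite (Pow J)" using fJ by simp
  have KP: "\<forall>t\<in>{0..1}. \<forall>S\<in>Pow J. ((\<lambda>s. kint J R p s S) has_integral (p t S - (if S = {} then 1 else 0))) {0..t}"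
    using assms(10) unfolding kolmogorov_def kint_def R_def gb_def by simp
  have Hg: "\<forall>t\<in>{0..1}. 0 \<le> gb t" using H_props(1)[OF assms(9)] unfolding gb_def .
  have HG: "\<forall>t\<in>{0..1}. ((\<lambda>s. (1 - ln 2) * (1 - res_f q s) + (if t0 < s then ln 2 * gb s else 0))
            has_integral res_f q t) {0..t}"
    using H_props(2)[OF assms(9)] unfolding gb_def .
  have tot: "(\<Sum>S\<in>Pow J. p s S) = 1" if s: "s \<in> {0..1}" for s
  proof -
    have "((\<lambda>r. \<Sum>S\<in>Pow J. kint J R p r S) has_integral (\<Sum>S\<in>Pow J. p s S - (if S = {} then 1 else 0))) {0..s}"
      by (rule has_integral_sum[OF fP]) (use KP s in auto)
    then have "(\<Sum>S\<in>Pow J. p s S - (if S = {} then 1 else 0)) = 0"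
      unfolding sum_kint_all[OF fJ] by simp
    moreover have "(\<Sum>S\<in>Pow J. (if S = {} then 1 else 0::real)) = 1"
      using sum.delta[OF fP, of "{}" "\<lambda>_. 1::real"] by simp
    ultimately show ?thesis unfolding sum_subtractf by simp
  qed
  define Fd where "Fd s = (\<Sum>T\<in>{T\<in>Pow J. u \<notin> T}. p s T * R s T u)" for s
  have fU: "finite {S\<in>Pow J. u \<in> S}" using fP by simp
  have Fint: "((\<lambda>s. Fd s) has_integral aux_f J p u r) {0..r}" if r: "r \<in> {0..1}" for r
  proof -
    have "((\<lambda>s. \<Sum>S\<in>{S\<in>Pow J. u \<in> S}. kint J R p s S) has_integral
        (\<Sum>S\<in>{S\<in>Pow J. u \<in> S}. p r S - (if S = {} then 1 else 0))) {0..r}"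
      by (rule has_integral_sum[OF fU]) (use KP r in auto)
    moreover have "(\<Sum>S\<in>{S\<in>Pow J. u \<in> S}. p r S - (if S = {} then 1 else 0)) = aux_f J p u r"
      unfolding aux_f_def by (intro sum.cong) auto
    ultimately show ?thesis unfolding sum_kint_u[OF fJ assms(11)] Fd_def by simp
  qed
  have fbar: "aux_fbar J p u s = 1 - aux_f J p u s" if s: "s \<in> {0..1}" for s
  proof -
    have "Pow J = {S\<in>Pow J. u \<in> S} \<union> {S\<in>Pow J. u \<notin> S}" by auto
    then have "(\<Sum>S\<in>Pow J. p s S) = aux_f J p u s + aux_fbar J p u s"
      unfolding aux_f_def aux_fbar_def using fP
      by (metis (no_types, lifting) finite_Un mem_Collect_eq sum.union_disjoint disjoint_iff)
    then show ?thesis using tot[OF s] by simp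
  qed
  have key: "Fd s \<le> (1 - ln 2) * (1 - aux_f J p u s) + (if t0 < s then ln 2 * gb s else 0)"
    if s: "s \<in> {0..1}" for s
    using key_ineq[OF assms(1,2,3,5,6,7,8,11), where gb=gb and s=s and p=p] Hg s fbar[OF s]
    unfolding Fd_def R_def by simp
  have "\<forall>r\<in>{0..1}. res_f q r - aux_f J p u r \<ge> 0"
  proof (rule nonneg_ode[where a = 0])
    show "\<forall>r\<in>{0..1}. ((\<lambda>s. ((1 - ln 2) * (1 - res_f q s) + (if t0 < s then ln 2 * gb s else 0)) - Fd s)
       has_integral (res_f q r - aux_f J p u r - 0)) {0..r}"
      using has_integral_diff[OF HG[rule_format] Fint] by simp
    show "\<forall>s\<in>{0..1}. res_f q s - aux_f J p u s < 0 \<longrightarrow>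
       0 \<le> (1 - ln 2) * (1 - res_f q s) + (if t0 < s then ln 2 * gb s else 0) - Fd s"
    proof (intro ballI impI)
      fix s assume s: "s \<in> {0..1}" "res_f q s - aux_f J p u s < 0"
      have "0 < 1 - ln (2::real)" using ln_2_less_1 by simp
      then have "0 \<le> (1 - ln 2) * (aux_f J p u s - res_f q s)" using s by simp
      then show "0 \<le> (1 - ln 2) * (1 - res_f q s) + (if t0 < s then ln 2 * gb s else 0) - Fd s"
        using key[OF s(1)] by (simp add: algebra_simps)
    qed
  qed simp
  then show ?thesis using assms(12) by auto
qed

end
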